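(* Let $\Gamma_0$ be a connected $G$-graph (resp. a connected abelian $G$-graph), and let $\Gamma$ be a multigraph all of whose connected components are isomorphic to $\Gamma_0$. Then $\Gamma$ is a $G$-graph (resp. an abelian $G$-graph).
   Context: Work in ZFC (axiom of choice assumed). For a group $G$ and a multiset $S$ of elements of $G$, $\Phi(G,S)$ is the multigraph (parallel edges allowed) whose vertex set is the union over the members $s$ of $S$ (with multiplicity, a repeated element giving a separate copy of its cosets per occurrence) of $V_s=\{\langle s\rangle x: x\in G\}$ (right cosets), with, for $\langle s\rangle x\in V_s$, $\langle t\rangle y\in V_t$, $s,t$ distinct members of $S$, one edge labeled $g$ between them for each $g\in\langle s\rangle x\cap\langle t\rangle y$, and no other edges. A $G$-graph is a multigraph isomorphic (ignoring labels) to some $\Phi(G,S)$; an abelian $G$-graph is one isomorphic to some $\Phi(G,S)$ with $G$ abelian. *)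

theory Defs
  imports "HOL-Algebra.Algebra"
begin

text \<open>A multigraph: a vertex set, an edge set, and for each edge the set of its
  end vertices (one vertex for a loop, two otherwise).\<close>

record ('v, 'e) mgraph =
  mverts :: "'v set"
  marcs  :: "'e set"
  mends  :: "'e \<Rightarrow> 'v set"

definition multigraph :: "('v, 'e) mgraph \<Rightarrow> bool" where
  "multigraph \<Gamma> \<longleftrightarrow>
     (\<forall>e \<in> marcs \<Gamma>. mends \<Gamma> e \<subseteq> mverts \<Gamma> \<and> card (mends \<Gamma> e) \<in> {1, 2})"

definition mg_iso :: "('v, 'e) mgraph \<Rightarrow> ('w, 'f) mgraph \<Rightarrow> bool" where
  "mg_iso \<Gamma> \<Delta> \<longleftrightarrow>
     (\<exists>f h. bij_betw f (mverts \<Gamma>) (mverts \<Delta>) \<and> bij_betw h (marcs \<Gamma>) (marcs \<Delta>) \<and>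
            (\<forall>e \<in> marcs \<Gamma>. mends \<Delta> (h e) = f ` mends \<Gamma> e))"

definition mg_adj :: "('v, 'e) mgraph \<Rightarrow> ('v \<times> 'v) set" where
  "mg_adj \<Gamma> = {(u, v). \<exists>e \<in> marcs \<Gamma>. u \<in> mends \<Gamma> e \<and> v \<in> mends \<Gamma> e}"

definition mg_reachable :: "('v, 'e) mgraph \<Rightarrow> 'v \<Rightarrow> 'v \<Rightarrow> bool" where
  "mg_reachable \<Gamma> u v \<longleftrightarrow> u \<in> mverts \<Gamma> \<and> v \<in> mverts \<Gamma> \<and> (u, v) \<in> (mg_adj \<Gamma>)\<^sup>*"

definition mg_connected :: "('v, 'e) mgraph \<Rightarrow> bool" where
  "mg_connected \<Gamma> \<longleftrightarrow> mverts \<Gamma> \<noteq> {} \<and>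
     (\<forall>u \<in> mverts \<Gamma>. \<forall>v \<in> mverts \<Gamma>. mg_reachable \<Gamma> u v)"

definition mg_components :: "('v, 'e) mgraph \<Rightarrow> 'v set set" where
  "mg_components \<Gamma> = {{u. mg_reachable \<Gamma> v u} | v. v \<in> mverts \<Gamma>}"

definition mg_induced :: "('v, 'e) mgraph \<Rightarrow> 'v set \<Rightarrow> ('v, 'e) mgraph" where
  "mg_induced \<Gamma> C =
     \<lparr> mverts = C, marcs = {e \<in> marcs \<Gamma>. mends \<Gamma> e \<subseteq> C}, mends = mends \<Gamma> \<rparr>"

text \<open>The multiset S is given as an indexed family s : I \<rightarrow> carrier G (an element
  occurring several times in S corresponds to several indices).  Vertices are
  pairs (i, X) with X a right coset of the cyclic subgroup generated by s i;
  for distinct indices i, j and cosets X, Y there is one edge labelled g for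
  each g in X \<inter> Y, represented as the pair ({(i,X),(j,Y)}, g).\<close>

definition Phi :: "('a, 'b) monoid_scheme \<Rightarrow> 'i set \<Rightarrow> ('i \<Rightarrow> 'a)
                     \<Rightarrow> ('i \<times> 'a set, ('i \<times> 'a set) set \<times> 'a) mgraph" where
  "Phi G I s =
     \<lparr> mverts = {(k, A) | k A. k \<in> I \<and> A \<in> RCOSETS G (generate G {s k})},
       marcs = {({(k, A), (l, B)}, g) | k A l B g.
                  k \<in> I \<and> l \<in> I \<and> k \<noteq> l \<and>
                  A \<in> RCOSETS G (generate G {s k}) \<and>
                  B \<in> RCOSETS G (generate G {s l}) \<and> g \<in> A \<inter> B},
       mends = fst \<rparr>"

text \<open>G-graphs and abelian G-graphs.  Since HOL cannot quantify over types, the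
  type of group elements and the type of indices of the multiset S are
  explicit parameters.\<close>

definition G_graph :: "'g itself \<Rightarrow> 'i itself \<Rightarrow> ('v, 'e) mgraph \<Rightarrow> bool" where
  "G_graph _ _ \<Gamma> \<longleftrightarrow>
     (\<exists>(G :: 'g monoid) (I :: 'i set) s.
        group G \<and> s \<in> I \<rightarrow> carrier G \<and> mg_iso (Phi G I s) \<Gamma>)"

definition abelian_G_graph :: "'g itself \<Rightarrow> 'i itself \<Rightarrow> ('v, 'e) mgraph \<Rightarrow> bool" where
  "abelian_G_graph _ _ \<Gamma> \<longleftrightarrow>
     (\<exists>(G :: 'g monoid) (I :: 'i set) s.
        comm_group G \<and> s \<in> I \<rightarrow> carrier G \<and> mg_iso (Phi G I s) \<Gamma>)"

end

theory Submission
  imports Defs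
begin

definition wfg :: "('v, 'e) mgraph \<Rightarrow> bool" where
  "wfg \<Gamma> \<longleftrightarrow> (\<forall>e \<in> marcs \<Gamma>. mends \<Gamma> e \<subseteq> mverts \<Gamma>)"

lemma mg_iso_trans:
  assumes "mg_iso A B" "mg_iso B C" shows "mg_iso A C"
proof -
  obtain f h where f: "bij_betw f (mverts A) (mverts B)" "bij_betw h (marcs A) (marcs B)"
    "\<forall>e \<in> marcs A. mends B (h e) = f ` mends A e" using assms(1) unfolding mg_iso_def by blast
  obtain f' h' where f': "bij_betw f' (mverts B) (mverts C)" "bij_betw h' (marcs B) (marcs C)"
    "\<forall>e \<in> marcs B. mends C (h' e) = f' ` mends B e" using assms(2) unfolding mg_iso_def by blast
  have "bij_betw (f' o f) (mverts A) (mverts C)" "bij_betw (h' o h) (marcs A) (marcs C)"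
    using bij_betw_trans[OF f(1) f'(1)] bij_betw_trans[OF f(2) f'(2)] by simp_all
  moreover have "\<forall>e \<in> marcs A. mends C ((h' o h) e) = (f' o f) ` mends A e"
  proof
    fix e assume e: "e \<in> marcs A"
    then have "h e \<in> marcs B" using bij_betwE[OF f(2)] by blast
    then have "mends C (h' (h e)) = f' ` mends B (h e)" using f'(3) by blast
    also have "\<dots> = f' ` f ` mends A e" using f(3) e by simp
    finally show "mends C ((h' o h) e) = (f' o f) ` mends A e" by (simp add: image_comp)
  qed
  ultimately show ?thesis unfolding mg_iso_def by blast
qed

lemma mg_iso_sym:
  assumes "wfg A" "mg_iso A B" shows "mg_iso B A"
proof -
  obtain f h where f: "bij_betw f (mverts A) (mverts B)" "bij_betw h (marcs A) (marcs B)"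
    "\<forall>e \<in> marcs A. mends B (h e) = f ` mends A e" using assms(2) unfolding mg_iso_def by blast
  have "bij_betw (inv_into (mverts A) f) (mverts B) (mverts A)"
       "bij_betw (inv_into (marcs A) h) (marcs B) (marcs A)"
    using f bij_betw_inv_into by blast+
  moreover have "\<forall>e \<in> marcs B. mends A (inv_into (marcs A) h e) = inv_into (mverts A) f ` mends B e"
  proof
    fix e assume e: "e \<in> marcs B"
    let ?e = "inv_into (marcs A) h e"
    have e1: "?e \<in> marcs A" "h ?e = e" using f(2) e
      by (auto simp: bij_betw_def intro: inv_into_into f_inv_into_f)
    have "mends B e = f ` mends A ?e" using f(3) e1 by metis
    moreover have "mends A ?e \<subseteq> mverts A" using assms(1) e1 unfolding wfg_def by blast
    ultimately show "mends A ?e = inv_into (mverts A) f ` mends B e"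
      using f(1) by (simp add: bij_betw_def inv_into_image_cancel)
  qed
  ultimately show ?thesis unfolding mg_iso_def by blast
qed

section \<open>Components\<close>

lemma adj_sym: "(u, v) \<in> mg_adj \<Gamma> \<Longrightarrow> (v, u) \<in> mg_adj \<Gamma>"
  by (auto simp: mg_adj_def)

lemma rt_sym: "(u, v) \<in> (mg_adj \<Gamma>)\<^sup>* \<Longrightarrow> (v, u) \<in> (mg_adj \<Gamma>)\<^sup>*"
proof (induction rule: rtrancl_induct)
  case base then show ?case by simp
next
  case (step y z) then show ?case
    by (meson adj_sym converse_rtrancl_into_rtrancl)
qed

lemma reach_sym: "mg_reachable \<Gamma> u v \<Longrightarrow> mg_reachable \<Gamma> v u"
  by (auto simp: mg_reachable_def rt_sym)

lemma reach_trans: "mg_reachable \<Gamma> u v \<Longrightarrow> mg_reachable \<Gamma> v w \<Longrightarrow> mg_reachable \<Gamma> u w"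
  by (auto simp: mg_reachable_def)

lemma comp_disj:
  assumes "C \<in> mg_components \<Gamma>" "D \<in> mg_components \<Gamma>" "x \<in> C" "x \<in> D"
  shows "C = D"
proof -
  obtain v w where C: "C = {u. mg_reachable \<Gamma> v u}" and D: "D = {u. mg_reachable \<Gamma> w u}"
    using assms(1,2) unfolding mg_components_def by blast
  have "mg_reachable \<Gamma> v x" "mg_reachable \<Gamma> w x" using assms C D by auto
  then have vw: "mg_reachable \<Gamma> v w" "mg_reachable \<Gamma> w v" by (meson reach_sym reach_trans)+
  have "C \<subseteq> D" unfolding C D using vw(2) reach_trans[of \<Gamma> w v] by blast
  moreover have "D \<subseteq> C" unfolding C D using vw(1) reach_trans[of \<Gamma> v w] by blast
  ultimately show ?thesis by blast
qed

lemma comp_sub: "C \<in> mg_components \<Gamma> \<Longrightarrow> C \<subseteq> mverts \<Gamma>"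
  by (auto simp: mg_components_def mg_reachable_def)

lemma vert_comp:
  assumes "v \<in> mverts \<Gamma>" shows "\<exists>C \<in> mg_components \<Gamma>. v \<in> C"
proof -
  have "v \<in> {u. mg_reachable \<Gamma> v u}" using assms by (simp add: mg_reachable_def)
  moreover have "{u. mg_reachable \<Gamma> v u} \<in> mg_components \<Gamma>"
    using assms unfolding mg_components_def by blast
  ultimately show ?thesis by blast
qed

lemma arc_nonempty:
  assumes "multigraph \<Gamma>" "e \<in> marcs \<Gamma>" shows "mends \<Gamma> e \<noteq> {}"
proof -
  have "card (mends \<Gamma> e) \<in> {1, 2}" using assms unfolding multigraph_def by blast
  then show ?thesis by auto
qed

lemma arc_comp:
  assumes "multigraph \<Gamma>" "e \<in> marcs \<Gamma>" shows "\<exists>C \<in> mg_components \<Gamma>. mends \<Gamma> e \<subseteq> C"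
proof -
  obtain u where u: "u \<in> mends \<Gamma> e" using arc_nonempty[OF assms] by blast
  have sub: "mends \<Gamma> e \<subseteq> mverts \<Gamma>" using assms unfolding multigraph_def by blast
  have "mends \<Gamma> e \<subseteq> {w. mg_reachable \<Gamma> u w}"
  proof
    fix w assume "w \<in> mends \<Gamma> e"
    then have "(u, w) \<in> mg_adj \<Gamma>" using u assms(2) unfolding mg_adj_def by blast
    then show "w \<in> {w. mg_reachable \<Gamma> u w}" using sub u \<open>w \<in> mends \<Gamma> e\<close>
      unfolding mg_reachable_def by auto
  qed
  moreover have "{w. mg_reachable \<Gamma> u w} \<in> mg_components \<Gamma>"
    using u sub unfolding mg_components_def by blast
  ultimately show ?thesis by blast
qed

section \<open>Disjoint copies\<close>

definition PX :: "('v, 'e) mgraph \<Rightarrow> 'x set \<Rightarrow> ('v \<times> 'x, 'e \<times> 'x) mgraph" where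
  "PX Q Y = \<lparr> mverts = mverts Q \<times> Y, marcs = marcs Q \<times> Y,
              mends = (\<lambda>(e, x). (\<lambda>v. (v, x)) ` mends Q e) \<rparr>"

lemma wfg_PX: "wfg Q \<Longrightarrow> wfg (PX Q Y)"
  unfolding wfg_def PX_def by auto

lemma PX_iso:
  assumes mg: "multigraph \<Gamma>" and bij: "bij_betw \<beta> Y (mg_components \<Gamma>)"
    and iso: "\<forall>C \<in> mg_components \<Gamma>. mg_iso Q (mg_induced \<Gamma> C)"
  shows "mg_iso (PX Q Y) \<Gamma>"
proof -
  let ?K = "mg_components \<Gamma>"
  define Rl where "Rl C p \<longleftrightarrow> bij_betw (fst p) (mverts Q) C \<and>
      bij_betw (snd p) (marcs Q) {e \<in> marcs \<Gamma>. mends \<Gamma> e \<subseteq> C} \<and>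
      (\<forall>e \<in> marcs Q. mends \<Gamma> (snd p e) = fst p ` mends Q e)" for C p
  have "\<forall>C \<in> ?K. \<exists>p. Rl C p"
  proof
    fix C assume "C \<in> ?K"
    then have "mg_iso Q (mg_induced \<Gamma> C)" using iso by blast
    then have "\<exists>f h. bij_betw f (mverts Q) C \<and> bij_betw h (marcs Q) {e \<in> marcs \<Gamma>. mends \<Gamma> e \<subseteq> C} \<and>
      (\<forall>e \<in> marcs Q. mends \<Gamma> (h e) = f ` mends Q e)" unfolding mg_iso_def mg_induced_def by simp
    then obtain f h where "bij_betw f (mverts Q) C" "bij_betw h (marcs Q) {e \<in> marcs \<Gamma>. mends \<Gamma> e \<subseteq> C}"
      "\<forall>e \<in> marcs Q. mends \<Gamma> (h e) = f ` mends Q e" by blast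
    then have "Rl C (f, h)" unfolding Rl_def by simp
    then show "\<exists>p. Rl C p" by blast
  qed
  from bchoice[OF this] obtain p where p: "\<And>C. C \<in> ?K \<Longrightarrow> Rl C (p C)" by blast
  define \<Phi> where "\<Phi> C = fst (p C)" for C
  define \<Psi> where "\<Psi> C = snd (p C)" for C
  have \<Phi>: "\<And>C. C \<in> ?K \<Longrightarrow> bij_betw (\<Phi> C) (mverts Q) C"
    and \<Psi>: "\<And>C. C \<in> ?K \<Longrightarrow> bij_betw (\<Psi> C) (marcs Q) {e \<in> marcs \<Gamma>. mends \<Gamma> e \<subseteq> C}"
    and inc: "\<And>C e. C \<in> ?K \<Longrightarrow> e \<in> marcs Q \<Longrightarrow> mends \<Gamma> (\<Psi> C e) = \<Phi> C ` mends Q e"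
    using p unfolding Rl_def \<Phi>_def \<Psi>_def by simp_all
  have \<beta>K: "\<And>x. x \<in> Y \<Longrightarrow> \<beta> x \<in> ?K" using bij_betwE[OF bij] by blast
  have \<beta>inj: "\<And>x y. x \<in> Y \<Longrightarrow> y \<in> Y \<Longrightarrow> \<beta> x = \<beta> y \<Longrightarrow> x = y"
    using inj_onD[OF bij_betw_imp_inj_on[OF bij]] by blast
  define F where "F = (\<lambda>(v, x). \<Phi> (\<beta> x) v)"
  define H where "H = (\<lambda>(e, x). \<Psi> (\<beta> x) e)"
  have "bij_betw F (mverts Q \<times> Y) (mverts \<Gamma>)"
    unfolding bij_betw_def
  proof (intro conjI)
    show "inj_on F (mverts Q \<times> Y)"
    proof (rule inj_onI, clarify)
      fix v1 x1 v2 x2 assume a: "v1 \<in> mverts Q" "x1 \<in> Y" "v2 \<in> mverts Q" "x2 \<in> Y"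
        "F (v1, x1) = F (v2, x2)"
      have p1: "\<Phi> (\<beta> x1) v1 \<in> \<beta> x1" using a(1) bij_betwE[OF \<Phi>[OF \<beta>K[OF a(2)]]] by blast
      have p2: "\<Phi> (\<beta> x2) v2 \<in> \<beta> x2" using a(3) bij_betwE[OF \<Phi>[OF \<beta>K[OF a(4)]]] by blast
      have eq: "\<Phi> (\<beta> x1) v1 = \<Phi> (\<beta> x2) v2" using a(5) unfolding F_def by simp
      have "\<beta> x1 = \<beta> x2" using comp_disj[OF \<beta>K[OF a(2)] \<beta>K[OF a(4)] p1] p2 eq by simp
      then have x: "x1 = x2" using \<beta>inj a(2,4) by blast
      have "v1 = v2" using eq x inj_onD[OF bij_betw_imp_inj_on[OF \<Phi>[OF \<beta>K[OF a(2)]]]] a(1,3) by simp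
      with x show "v1 = v2 \<and> x1 = x2" by simp
    qed
    show "F ` (mverts Q \<times> Y) = mverts \<Gamma>"
    proof
      show "F ` (mverts Q \<times> Y) \<subseteq> mverts \<Gamma>"
      proof clarify
        fix v x assume "v \<in> mverts Q" "x \<in> Y"
        then have "\<Phi> (\<beta> x) v \<in> \<beta> x" using bij_betwE[OF \<Phi>[OF \<beta>K[OF \<open>x \<in> Y\<close>]]] by simp
        then show "F (v, x) \<in> mverts \<Gamma>" using comp_sub[OF \<beta>K[OF \<open>x \<in> Y\<close>]] unfolding F_def by auto
      qed
      show "mverts \<Gamma> \<subseteq> F ` (mverts Q \<times> Y)"
      proof
        fix u assume "u \<in> mverts \<Gamma>"
        obtain C where C: "C \<in> ?K" "u \<in> C" using vert_comp[OF \<open>u \<in> mverts \<Gamma>\<close>] by blast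
        have "C \<in> \<beta> ` Y" using bij_betw_imp_surj_on[OF bij] C(1) by simp
        then obtain x where x: "x \<in> Y" "\<beta> x = C" by blast
        have "u \<in> \<Phi> C ` mverts Q" using bij_betw_imp_surj_on[OF \<Phi>[OF C(1)]] C(2) by simp
        then obtain v where v: "v \<in> mverts Q" "\<Phi> C v = u" by blast
        have "(v, x) \<in> mverts Q \<times> Y" using v x by simp
        moreover have "u = F (v, x)" using v x unfolding F_def by simp
        ultimately show "u \<in> F ` (mverts Q \<times> Y)" by (rule rev_image_eqI)
      qed
    qed
  qed
  moreover have "bij_betw H (marcs Q \<times> Y) (marcs \<Gamma>)"
    unfolding bij_betw_def
  proof (intro conjI)
    show "inj_on H (marcs Q \<times> Y)"
    proof (rule inj_onI, clarify)
      fix v1 x1 v2 x2 assume a: "v1 \<in> marcs Q" "x1 \<in> Y" "v2 \<in> marcs Q" "x2 \<in> Y"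
        "H (v1, x1) = H (v2, x2)"
      have m: "\<Psi> (\<beta> x1) v1 \<in> {e \<in> marcs \<Gamma>. mends \<Gamma> e \<subseteq> \<beta> x1}"
        "\<Psi> (\<beta> x2) v2 \<in> {e \<in> marcs \<Gamma>. mends \<Gamma> e \<subseteq> \<beta> x2}"
        using a bij_betwE[OF \<Psi>[OF \<beta>K[OF a(2)]]] bij_betwE[OF \<Psi>[OF \<beta>K[OF a(4)]]] by simp_all
      have eq: "\<Psi> (\<beta> x1) v1 = \<Psi> (\<beta> x2) v2" using a(5) unfolding H_def by simp
      obtain w where w: "w \<in> mends \<Gamma> (\<Psi> (\<beta> x1) v1)" using arc_nonempty[OF mg, of "\<Psi> (\<beta> x1) v1"] m(1) by auto
      have w1: "w \<in> \<beta> x1" using w m(1) by blast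
      have w2: "w \<in> \<beta> x2" using w m(2) eq by auto
      have "\<beta> x1 = \<beta> x2" using comp_disj[OF \<beta>K[OF a(2)] \<beta>K[OF a(4)] w1 w2] .
      then have x: "x1 = x2" using \<beta>inj a(2,4) by blast
      have "v1 = v2" using eq x inj_onD[OF bij_betw_imp_inj_on[OF \<Psi>[OF \<beta>K[OF a(2)]]]] a(1,3) by simp
      with x show "v1 = v2 \<and> x1 = x2" by simp
    qed
    show "H ` (marcs Q \<times> Y) = marcs \<Gamma>"
    proof
      show "H ` (marcs Q \<times> Y) \<subseteq> marcs \<Gamma>"
      proof clarify
        fix v x assume "v \<in> marcs Q" "x \<in> Y"
        then have "\<Psi> (\<beta> x) v \<in> {e \<in> marcs \<Gamma>. mends \<Gamma> e \<subseteq> \<beta> x}" using bij_betwE[OF \<Psi>[OF \<beta>K[OF \<open>x \<in> Y\<close>]]] by simp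
        then show "H (v, x) \<in> marcs \<Gamma>" unfolding H_def by auto
      qed
      show "marcs \<Gamma> \<subseteq> H ` (marcs Q \<times> Y)"
      proof
        fix u assume "u \<in> marcs \<Gamma>"
        obtain C where C: "C \<in> ?K" "mends \<Gamma> u \<subseteq> C" using arc_comp[OF mg \<open>u \<in> marcs \<Gamma>\<close>] by blast
        have "C \<in> \<beta> ` Y" using bij_betw_imp_surj_on[OF bij] C(1) by simp
        then obtain x where x: "x \<in> Y" "\<beta> x = C" by blast
        have "u \<in> {e \<in> marcs \<Gamma>. mends \<Gamma> e \<subseteq> C}" using C(2) \<open>u \<in> marcs \<Gamma>\<close> by simp
        then have "u \<in> \<Psi> C ` marcs Q" using bij_betw_imp_surj_on[OF \<Psi>[OF C(1)]] by simp
        then obtain v where v: "v \<in> marcs Q" "\<Psi> C v = u" by blast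
        have "(v, x) \<in> marcs Q \<times> Y" using v x by simp
        moreover have "u = H (v, x)" using v x unfolding H_def by simp
        ultimately show "u \<in> H ` (marcs Q \<times> Y)" by (rule rev_image_eqI)
      qed
    qed
  qed
  moreover have "\<forall>e \<in> marcs Q \<times> Y. mends \<Gamma> (H e) = F ` mends (PX Q Y) e"
  proof
    fix e assume "e \<in> marcs Q \<times> Y"
    then obtain e0 x where e: "e = (e0, x)" "e0 \<in> marcs Q" "x \<in> Y" by blast
    have "mends \<Gamma> (H e) = \<Phi> (\<beta> x) ` mends Q e0" using inc[OF \<beta>K[OF e(3)] e(2)] e(1) unfolding H_def by simp
    also have "\<dots> = F ` mends (PX Q Y) e" unfolding e(1) PX_def F_def by (simp add: image_image)
    finally show "mends \<Gamma> (H e) = F ` mends (PX Q Y) e" .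
  qed
  moreover have vPX: "mverts (PX Q Y) = mverts Q \<times> Y" "marcs (PX Q Y) = marcs Q \<times> Y"
    by (simp_all add: PX_def)
  ultimately show ?thesis unfolding mg_iso_def vPX by blast
qed


section \<open>Algebra\<close>

lemma gen_prod:
  assumes G: "group G" and T: "group T" and a: "a \<in> carrier G"
  shows "generate (G \<times>\<times> T) {(a, \<one>\<^bsub>T\<^esub>)} = generate G {a} \<times> {\<one>\<^bsub>T\<^esub>}"
proof -
  have o1: "\<one>\<^bsub>T\<^esub> \<in> carrier T" by (rule monoid.one_closed[OF group.is_monoid[OF T]])
  have oo: "\<one>\<^bsub>T\<^esub> \<otimes>\<^bsub>T\<^esub> \<one>\<^bsub>T\<^esub> = \<one>\<^bsub>T\<^esub>" by (rule monoid.l_one[OF group.is_monoid[OF T] o1])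
  have hom: "(\<lambda>x. (x, \<one>\<^bsub>T\<^esub>)) \<in> hom G (G \<times>\<times> T)"
    unfolding hom_def using o1 oo by (auto simp: Pi_def)
  interpret gh: group_hom G "G \<times>\<times> T" "\<lambda>x. (x, \<one>\<^bsub>T\<^esub>)"
    using G T hom by (simp add: group_hom_def group_hom_axioms_def DirProd_group)
  have "generate (G \<times>\<times> T) ((\<lambda>x. (x, \<one>\<^bsub>T\<^esub>)) ` {a}) = (\<lambda>x. (x, \<one>\<^bsub>T\<^esub>)) ` generate G {a}"
    using gh.generate_img[of "{a}"] a by simp
  then show ?thesis by auto
qed

lemma coset_prod:
  assumes T: "group T" and h: "h \<in> carrier T"
  shows "(L \<times> {\<one>\<^bsub>T\<^esub>}) #>\<^bsub>G \<times>\<times> T\<^esub> (g, h) = (L #>\<^bsub>G\<^esub> g) \<times> {h}"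
  using monoid.l_one[OF group.is_monoid[OF T] h] unfolding r_coset_def by auto

lemma rcosets_prod:
  assumes T: "group T"
  shows "RCOSETS (G \<times>\<times> T) (L \<times> {\<one>\<^bsub>T\<^esub>}) = {A \<times> {h} | A h. A \<in> RCOSETS G L \<and> h \<in> carrier T}"
proof
  show "RCOSETS (G \<times>\<times> T) (L \<times> {\<one>\<^bsub>T\<^esub>}) \<subseteq> {A \<times> {h} | A h. A \<in> RCOSETS G L \<and> h \<in> carrier T}"
  proof
    fix W assume "W \<in> RCOSETS (G \<times>\<times> T) (L \<times> {\<one>\<^bsub>T\<^esub>})"
    then obtain g h where gh: "g \<in> carrier G" "h \<in> carrier T" "W = (L \<times> {\<one>\<^bsub>T\<^esub>}) #>\<^bsub>G \<times>\<times> T\<^esub> (g, h)"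
      unfolding RCOSETS_def by auto
    then have "W = (L #>\<^bsub>G\<^esub> g) \<times> {h}" using coset_prod[OF T gh(2)] by simp
    moreover have "L #>\<^bsub>G\<^esub> g \<in> RCOSETS G L" using gh(1) unfolding RCOSETS_def by auto
    ultimately show "W \<in> {A \<times> {h} | A h. A \<in> RCOSETS G L \<and> h \<in> carrier T}" using gh(2) by blast
  qed
  show "{A \<times> {h} | A h. A \<in> RCOSETS G L \<and> h \<in> carrier T} \<subseteq> RCOSETS (G \<times>\<times> T) (L \<times> {\<one>\<^bsub>T\<^esub>})"
  proof
    fix W assume "W \<in> {A \<times> {h} | A h. A \<in> RCOSETS G L \<and> h \<in> carrier T}"
    then obtain A h where Ah: "W = A \<times> {h}" "A \<in> RCOSETS G L" "h \<in> carrier T" by blast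
    then obtain g where g: "g \<in> carrier G" "A = L #>\<^bsub>G\<^esub> g" unfolding RCOSETS_def by auto
    have "W = (L \<times> {\<one>\<^bsub>T\<^esub>}) #>\<^bsub>G \<times>\<times> T\<^esub> (g, h)" using coset_prod[OF T Ah(3), of G L g] Ah(1) g(2) by simp
    moreover have "(g, h) \<in> carrier (G \<times>\<times> T)" using g(1) Ah(3) by simp
    ultimately show "W \<in> RCOSETS (G \<times>\<times> T) (L \<times> {\<one>\<^bsub>T\<^esub>})" unfolding RCOSETS_def by blast
  qed
qed

lemma coset_ne:
  assumes "A \<in> RCOSETS G (generate G Z)" shows "A \<noteq> {}"
proof -
  obtain g where "A = generate G Z #>\<^bsub>G\<^esub> g" using assms unfolding RCOSETS_def by auto
  then have "\<one>\<^bsub>G\<^esub> \<otimes>\<^bsub>G\<^esub> g \<in> A" unfolding r_coset_def using generate.one by blast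
  then show ?thesis by blast
qed


lemma Phi_prod_iso:
  fixes G :: "('a, 'b) monoid_scheme" and T :: "('c, 'e) monoid_scheme" and I :: "'i set"
  assumes G: "group G" and T: "group T" and s: "s \<in> I \<rightarrow> carrier G"
  shows "mg_iso (PX (Phi G I s) (carrier T)) (Phi (G \<times>\<times> T) I (\<lambda>k. (s k, \<one>\<^bsub>T\<^esub>)))"
proof -
  define RC where "RC k = RCOSETS G (generate G {s k})" for k
  define RC' where "RC' k = RCOSETS (G \<times>\<times> T) (generate (G \<times>\<times> T) {(s k, \<one>\<^bsub>T\<^esub>)})" for k
  have RC': "RC' k = {A \<times> {h} | A h. A \<in> RC k \<and> h \<in> carrier T}" if "k \<in> I" for k
  proof -
    have sk: "s k \<in> carrier G" using s that by (rule funcset_mem)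
    have "generate (G \<times>\<times> T) {(s k, \<one>\<^bsub>T\<^esub>)} = generate G {s k} \<times> {\<one>\<^bsub>T\<^esub>}"
      by (rule gen_prod[OF G T sk])
    then show ?thesis unfolding RC_def RC'_def using rcosets_prod[OF T, of G "generate G {s k}"] by simp
  qed
  have ne: "A \<noteq> {}" if "A \<in> RC k" for A k using coset_ne that unfolding RC_def by blast
  have Vs: "mverts (Phi G I s) = {(k, A) | k A. k \<in> I \<and> A \<in> RC k}"
    unfolding Phi_def RC_def by simp
  have As: "marcs (Phi G I s) = {({(k, A), (l, B)}, g) | k A l B g. k \<in> I \<and> l \<in> I \<and> k \<noteq> l \<and>
      A \<in> RC k \<and> B \<in> RC l \<and> g \<in> A \<inter> B}"
    unfolding Phi_def RC_def by simp
  have Ms: "mends (Phi G I s) = fst" unfolding Phi_def by simp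
  have Vs': "mverts (Phi (G \<times>\<times> T) I (\<lambda>k. (s k, \<one>\<^bsub>T\<^esub>))) = {(k, A) | k A. k \<in> I \<and> A \<in> RC' k}"
    unfolding Phi_def RC'_def by simp
  have As': "marcs (Phi (G \<times>\<times> T) I (\<lambda>k. (s k, \<one>\<^bsub>T\<^esub>))) = {({(k, A), (l, B)}, g) | k A l B g. k \<in> I \<and> l \<in> I \<and> k \<noteq> l \<and>
      A \<in> RC' k \<and> B \<in> RC' l \<and> g \<in> A \<inter> B}"
    unfolding Phi_def RC'_def by simp
  have Ms': "mends (Phi (G \<times>\<times> T) I (\<lambda>k. (s k, \<one>\<^bsub>T\<^esub>))) = fst" unfolding Phi_def by simp
  define mh where "mh h = (\<lambda>(k::'i, A::'a set). (k, A \<times> {h::'c}))" for h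
  define m where "m = (\<lambda>(v, h). mh h v)"
  define M where "M = (\<lambda>((V, g::'a), h). (mh h ` V, (g, h)))"
  have mh_simp: "mh h (k, A) = (k, A \<times> {h})" for h k A unfolding mh_def by simp
  have mh_inj: "inj (mh h)" for h
  proof (rule injI)
    fix u w assume "mh h u = mh h w"
    then show "u = w" unfolding mh_def by (cases u, cases w) (auto simp: times_eq_iff)
  qed
  have bm: "bij_betw m (mverts (Phi G I s) \<times> carrier T) (mverts (Phi (G \<times>\<times> T) I (\<lambda>k. (s k, \<one>\<^bsub>T\<^esub>))))"
    unfolding bij_betw_def
  proof
    show "inj_on m (mverts (Phi G I s) \<times> carrier T)"
    proof (rule inj_onI)
      fix p q assume p: "p \<in> mverts (Phi G I s) \<times> carrier T" and q: "q \<in> mverts (Phi G I s) \<times> carrier T"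
        and eq: "m p = m q"
      obtain k1 A1 h1 where p1: "p = ((k1, A1), h1)" "k1 \<in> I" "A1 \<in> RC k1" using p Vs by auto
      obtain k2 A2 h2 where q1: "q = ((k2, A2), h2)" "k2 \<in> I" "A2 \<in> RC k2" using q Vs by auto
      have "k1 = k2" "A1 \<times> {h1} = A2 \<times> {h2}" using eq p1(1) q1(1) unfolding m_def mh_def by simp_all
      moreover have "A1 \<noteq> {}" using ne p1(3) .
      ultimately show "p = q" using p1(1) q1(1) by (auto simp: times_eq_iff)
    qed
    show "m ` (mverts (Phi G I s) \<times> carrier T) = mverts (Phi (G \<times>\<times> T) I (\<lambda>k. (s k, \<one>\<^bsub>T\<^esub>)))"
    proof
      show "m ` (mverts (Phi G I s) \<times> carrier T) \<subseteq> mverts (Phi (G \<times>\<times> T) I (\<lambda>k. (s k, \<one>\<^bsub>T\<^esub>)))"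
      proof
        fix y assume "y \<in> m ` (mverts (Phi G I s) \<times> carrier T)"
        then obtain k A h where y: "y = (k, A \<times> {h})" "k \<in> I" "A \<in> RC k" "h \<in> carrier T"
          using Vs unfolding m_def mh_def by auto
        then have "A \<times> {h} \<in> RC' k" using RC' by blast
        then show "y \<in> mverts (Phi (G \<times>\<times> T) I (\<lambda>k. (s k, \<one>\<^bsub>T\<^esub>)))" using y Vs' by blast
      qed
      show "mverts (Phi (G \<times>\<times> T) I (\<lambda>k. (s k, \<one>\<^bsub>T\<^esub>))) \<subseteq> m ` (mverts (Phi G I s) \<times> carrier T)"
      proof
        fix y assume "y \<in> mverts (Phi (G \<times>\<times> T) I (\<lambda>k. (s k, \<one>\<^bsub>T\<^esub>)))"
        then obtain k A' where y: "y = (k, A')" "k \<in> I" "A' \<in> RC' k" using Vs' by blast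
        then obtain A h where Ah: "A' = A \<times> {h}" "A \<in> RC k" "h \<in> carrier T" using RC' by blast
        have "((k, A), h) \<in> mverts (Phi G I s) \<times> carrier T" using Vs y(2) Ah by blast
        moreover have "y = m ((k, A), h)" using y Ah unfolding m_def mh_def by simp
        ultimately show "y \<in> m ` (mverts (Phi G I s) \<times> carrier T)" by (rule rev_image_eqI)
      qed
    qed
  qed
  have bM: "bij_betw M (marcs (Phi G I s) \<times> carrier T) (marcs (Phi (G \<times>\<times> T) I (\<lambda>k. (s k, \<one>\<^bsub>T\<^esub>))))"
    unfolding bij_betw_def
  proof
    show "inj_on M (marcs (Phi G I s) \<times> carrier T)"
    proof (rule inj_onI)
      fix p q assume eq: "M p = M q"
      obtain V1 g1 h1 where p1: "p = ((V1, g1), h1)" by (metis prod.collapse)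
      obtain V2 g2 h2 where q1: "q = ((V2, g2), h2)" by (metis prod.collapse)
      have e1: "g1 = g2" "h1 = h2" "mh h1 ` V1 = mh h2 ` V2" using eq p1 q1 unfolding M_def by auto
      then have "V1 = V2" using mh_inj[of h1] by (simp add: inj_image_eq_iff)
      then show "p = q" using p1 q1 e1 by simp
    qed
    show "M ` (marcs (Phi G I s) \<times> carrier T) = marcs (Phi (G \<times>\<times> T) I (\<lambda>k. (s k, \<one>\<^bsub>T\<^esub>)))"
    proof
      show "M ` (marcs (Phi G I s) \<times> carrier T) \<subseteq> marcs (Phi (G \<times>\<times> T) I (\<lambda>k. (s k, \<one>\<^bsub>T\<^esub>)))"
      proof
        fix y assume "y \<in> M ` (marcs (Phi G I s) \<times> carrier T)"
        then obtain e h where eh: "e \<in> marcs (Phi G I s)" "h \<in> carrier T" "y = M (e, h)" by blast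
        then obtain k A l B g where e: "e = ({(k, A), (l, B)}, g)" "k \<in> I" "l \<in> I" "k \<noteq> l"
          "A \<in> RC k" "B \<in> RC l" "g \<in> A \<inter> B" using As by blast
        have y: "y = ({(k, A \<times> {h}), (l, B \<times> {h})}, (g, h))" using eh(3) e(1) unfolding M_def mh_def by simp
        have "A \<times> {h} \<in> RC' k" "B \<times> {h} \<in> RC' l" using RC' e eh(2) by blast+
        moreover have "(g, h) \<in> (A \<times> {h}) \<inter> (B \<times> {h})" using e(7) by simp
        ultimately show "y \<in> marcs (Phi (G \<times>\<times> T) I (\<lambda>k. (s k, \<one>\<^bsub>T\<^esub>)))"
          unfolding As' y using e(2-4) by blast
      qed
      show "marcs (Phi (G \<times>\<times> T) I (\<lambda>k. (s k, \<one>\<^bsub>T\<^esub>))) \<subseteq> M ` (marcs (Phi G I s) \<times> carrier T)"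
      proof
        fix y assume "y \<in> marcs (Phi (G \<times>\<times> T) I (\<lambda>k. (s k, \<one>\<^bsub>T\<^esub>)))"
        then obtain k A' l B' g' where y: "y = ({(k, A'), (l, B')}, g')" "k \<in> I" "l \<in> I" "k \<noteq> l"
          "A' \<in> RC' k" "B' \<in> RC' l" "g' \<in> A' \<inter> B'" using As' by blast
        obtain A h1 where A: "A' = A \<times> {h1}" "A \<in> RC k" "h1 \<in> carrier T" using RC' y(2,5) by blast
        obtain B h2 where B: "B' = B \<times> {h2}" "B \<in> RC l" "h2 \<in> carrier T" using RC' y(3,6) by blast
        obtain g where g: "g' = (g, h1)" "g \<in> A" "g \<in> B" "h2 = h1" using y(7) A(1) B(1) by auto
        have "(({(k, A), (l, B)}, g), h1) \<in> marcs (Phi G I s) \<times> carrier T"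
          unfolding As using y(2-4) A(2,3) B(2) g(2,3) by blast
        moreover have "y = M (({(k, A), (l, B)}, g), h1)"
          using y(1) A(1) B(1) g unfolding M_def mh_def by simp
        ultimately show "y \<in> M ` (marcs (Phi G I s) \<times> carrier T)" by (rule rev_image_eqI)
      qed
    qed
  qed
  have inc: "\<forall>e \<in> marcs (Phi G I s) \<times> carrier T.
     mends (Phi (G \<times>\<times> T) I (\<lambda>k. (s k, \<one>\<^bsub>T\<^esub>))) (M e) = m ` mends (PX (Phi G I s) (carrier T)) e"
  proof
    fix e assume "e \<in> marcs (Phi G I s) \<times> carrier T"
    obtain V g h where e: "e = ((V, g), h)" by (metis prod.collapse)
    have "mends (Phi (G \<times>\<times> T) I (\<lambda>k. (s k, \<one>\<^bsub>T\<^esub>))) (M e) = mh h ` V"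
      unfolding Ms' e M_def by simp
    also have "\<dots> = m ` mends (PX (Phi G I s) (carrier T)) e"
      unfolding e PX_def m_def by (simp add: Ms image_image)
    finally show "mends (Phi (G \<times>\<times> T) I (\<lambda>k. (s k, \<one>\<^bsub>T\<^esub>))) (M e) = m ` mends (PX (Phi G I s) (carrier T)) e" .
  qed
  have vPX: "mverts (PX (Phi G I s) (carrier T)) = mverts (Phi G I s) \<times> carrier T"
    "marcs (PX (Phi G I s) (carrier T)) = marcs (Phi G I s) \<times> carrier T"
    by (simp_all add: PX_def)
  show ?thesis unfolding mg_iso_def vPX using bm bM inc by blast
qed


lemma wfg_Phi: "wfg (Phi G I s)"
  unfolding wfg_def
proof
  fix e assume "e \<in> marcs (Phi G I s)"
  then obtain k A l B g where e: "e = ({(k, A), (l, B)}, g)" "k \<in> I" "l \<in> I"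
    "A \<in> RCOSETS G (generate G {s k})" "B \<in> RCOSETS G (generate G {s l})"
    unfolding Phi_def by auto
  then show "mends (Phi G I s) e \<subseteq> mverts (Phi G I s)" unfolding Phi_def by auto
qed

lemma wfg_induced: "wfg (mg_induced \<Gamma> C)"
  unfolding wfg_def mg_induced_def by simp

lemma dirprod_comm:
  assumes "comm_group G" "comm_group T" shows "comm_group (G \<times>\<times> T)"
proof -
  have gG: "group G" and gT: "group T" using assms unfolding comm_group_def by blast+
  have cG: "comm_monoid G" and cT: "comm_monoid T" using assms unfolding comm_group_def by blast+
  show ?thesis
  proof (rule group.group_comm_groupI[OF DirProd_group[OF gG gT]])
    fix x y assume x: "x \<in> carrier (G \<times>\<times> T)" and y: "y \<in> carrier (G \<times>\<times> T)"
    obtain x1 x2 where xx: "x = (x1, x2)" by (cases x)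
    obtain y1 y2 where yy: "y = (y1, y2)" by (cases y)
    have "x1 \<in> carrier G" "x2 \<in> carrier T" "y1 \<in> carrier G" "y2 \<in> carrier T" using x y xx yy by auto
    then show "x \<otimes>\<^bsub>G \<times>\<times> T\<^esub> y = y \<otimes>\<^bsub>G \<times>\<times> T\<^esub> x"
      unfolding xx yy using comm_monoid.m_comm[OF cG] comm_monoid.m_comm[OF cT] by simp
  qed
qed

lemma transport_comm_group:
  assumes H: "comm_group H0" and d: "bij_betw d (carrier H0) Y"
  shows "comm_group \<lparr>carrier = Y,
     monoid.mult = (\<lambda>a b. d (inv_into (carrier H0) d a \<otimes>\<^bsub>H0\<^esub> inv_into (carrier H0) d b)),
     one = d \<one>\<^bsub>H0\<^esub>\<rparr>"
proof -
  interpret H0: comm_group H0 by (rule H)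
  let ?i = "inv_into (carrier H0) d"
  have im: "d ` carrier H0 = Y" using d by (simp add: bij_betw_def)
  have injd: "inj_on d (carrier H0)" using d by (simp add: bij_betw_def)
  have i1: "?i a \<in> carrier H0" if "a \<in> Y" for a using that im inv_into_into by metis
  have i2: "d (?i a) = a" if "a \<in> Y" for a using that im f_inv_into_f by metis
  have i3: "?i (d x) = x" if "x \<in> carrier H0" for x using that injd inv_into_f_f by metis
  have dY: "d x \<in> Y" if "x \<in> carrier H0" for x using that im by blast
  show ?thesis
  proof (rule comm_groupI, simp_all)
    fix x y assume "x \<in> Y" "y \<in> Y"
    then show "d (?i x \<otimes>\<^bsub>H0\<^esub> ?i y) \<in> Y" using i1 dY by simp
  next
    show "d \<one>\<^bsub>H0\<^esub> \<in> Y" using dY by simp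
  next
    fix x y z assume "x \<in> Y" "y \<in> Y" "z \<in> Y"
    then show "d (?i (d (?i x \<otimes>\<^bsub>H0\<^esub> ?i y)) \<otimes>\<^bsub>H0\<^esub> ?i z) = d (?i x \<otimes>\<^bsub>H0\<^esub> ?i (d (?i y \<otimes>\<^bsub>H0\<^esub> ?i z)))"
      using i1 i3 by (simp add: H0.m_assoc)
  next
    fix x y assume "x \<in> Y" "y \<in> Y"
    then show "d (?i x \<otimes>\<^bsub>H0\<^esub> ?i y) = d (?i y \<otimes>\<^bsub>H0\<^esub> ?i x)" using i1 by (simp add: H0.m_comm)
  next
    fix x assume "x \<in> Y"
    then show "d (?i (d \<one>\<^bsub>H0\<^esub>) \<otimes>\<^bsub>H0\<^esub> ?i x) = x" using i1 i2 i3 by simp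
  next
    fix x assume x: "x \<in> Y"
    have "d (inv\<^bsub>H0\<^esub> (?i x)) \<in> Y" using dY i1 x by simp
    moreover have "d (?i (d (inv\<^bsub>H0\<^esub> (?i x))) \<otimes>\<^bsub>H0\<^esub> ?i x) = d \<one>\<^bsub>H0\<^esub>" using i1 i3 x by simp
    ultimately show "\<exists>y\<in>Y. d (?i y \<otimes>\<^bsub>H0\<^esub> ?i x) = d \<one>\<^bsub>H0\<^esub>" by blast
  qed
qed

lemma exists_T_from:
  fixes K :: "'v set set" and H0 :: "('z, 'w) monoid_scheme"
  assumes H: "comm_group H0" and g: "bij_betw \<gamma> (carrier H0) K"
  shows "\<exists>(T :: ('v set \<Rightarrow> int) monoid) \<beta>. comm_group T \<and> bij_betw \<beta> (carrier T) K"
proof -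
  define j where "j C = (\<lambda>D. if D = C then 1 else (0::int))" for C :: "'v set"
  have injj: "inj_on j K"
  proof (rule inj_onI)
    fix C1 C2 assume "j C1 = j C2"
    then have "j C1 C1 = j C2 C1" by simp
    then show "C1 = C2" unfolding j_def by (cases "C1 = C2") simp_all
  qed
  have bj: "bij_betw j K (j ` K)" using injj by (simp add: bij_betw_def)
  define d where "d = j \<circ> \<gamma>"
  have bd: "bij_betw d (carrier H0) (j ` K)" unfolding d_def using bij_betw_trans[OF g bj] .
  define T :: "('v set \<Rightarrow> int) monoid" where "T = \<lparr>carrier = j ` K,
     monoid.mult = (\<lambda>a b. d (inv_into (carrier H0) d a \<otimes>\<^bsub>H0\<^esub> inv_into (carrier H0) d b)),
     one = d \<one>\<^bsub>H0\<^esub>\<rparr>"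
  have "comm_group T" unfolding T_def by (rule transport_comm_group[OF H bd])
  moreover have "bij_betw (inv_into K j) (carrier T) K" unfolding T_def
    using bij_betw_inv_into[OF bj] by simp
  ultimately show ?thesis by blast
qed

lemma exists_T:
  fixes K :: "'v set set"
  assumes "K \<noteq> {}"
  shows "\<exists>(T :: ('v set \<Rightarrow> int) monoid) \<beta>. comm_group T \<and> bij_betw \<beta> (carrier T) K"
proof (cases "finite K")
  case True
  define n where "n = card K"
  have n0: "n \<noteq> 0" using True assms unfolding n_def by simp
  have c: "carrier (integer_mod_group n) = {0..<int n}" using n0 by (simp add: carrier_integer_mod_group)
  have "card {0..<int n} = card K" unfolding n_def by simp
  then obtain \<gamma> where "bij_betw \<gamma> {0..<int n} K" using finite_same_card_bij[OF _ True] by blast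
  then have "bij_betw \<gamma> (carrier (integer_mod_group n)) K" using c by simp
  then show ?thesis by (rule exists_T_from[OF abelian_integer_mod_group])
next
  case False
  then have "carrier (free_Abelian_group K) \<approx> K" by (rule eqpoll_free_Abelian_group_infinite)
  then obtain \<gamma> where "bij_betw \<gamma> (carrier (free_Abelian_group K)) K" unfolding eqpoll_def by blast
  then show ?thesis by (rule exists_T_from[OF abelian_free_Abelian_group])
qed

theorem proposition3:
  fixes \<Gamma>0 :: "('v0, 'e0) mgraph" and \<Gamma> :: "('v, 'e) mgraph"
  assumes "multigraph \<Gamma>"
    and "mg_connected \<Gamma>0"
    and "\<forall>C \<in> mg_components \<Gamma>. mg_iso (mg_induced \<Gamma> C) \<Gamma>0"
  shows "(G_graph TYPE('g) TYPE('i) \<Gamma>0 \<longrightarrow>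
            G_graph TYPE('g \<times> ('v set \<Rightarrow> int)) TYPE('i) \<Gamma>) \<and>
         (abelian_G_graph TYPE('g) TYPE('i) \<Gamma>0 \<longrightarrow>
            abelian_G_graph TYPE('g \<times> ('v set \<Rightarrow> int)) TYPE('i) \<Gamma>)"
proof -
  let ?K = "mg_components \<Gamma>"
  have key: "\<exists>(G' :: ('g \<times> ('v set \<Rightarrow> int)) monoid) (I' :: 'i set) s'.
      (group G' \<and> (comm_group G \<longrightarrow> comm_group G')) \<and> s' \<in> I' \<rightarrow> carrier G' \<and> mg_iso (Phi G' I' s') \<Gamma>"
    if G: "group G" and s: "s \<in> I \<rightarrow> carrier G" and iso0: "mg_iso (Phi G I s) \<Gamma>0"
    for G :: "'g monoid" and I :: "'i set" and s
  proof (cases "?K = {}")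
    case True
    define T :: "('v set \<Rightarrow> int) monoid" where "T = singleton_group (\<lambda>_. 0)"
    have cT: "comm_group T" unfolding T_def by simp
    have gT: "group T" unfolding T_def by simp
    have v: "mverts \<Gamma> = {}"
    proof (rule equals0I)
      fix v assume "v \<in> mverts \<Gamma>"
      then show False using vert_comp[of v \<Gamma>] True by blast
    qed
    have a: "marcs \<Gamma> = {}"
    proof (rule equals0I)
      fix e assume "e \<in> marcs \<Gamma>"
      then show False using arc_comp[OF assms(1), of e] True by blast
    qed
    have vP: "mverts (Phi (G \<times>\<times> T) {} (\<lambda>k. (s k, \<one>\<^bsub>T\<^esub>))) = {}" unfolding Phi_def by simp
    have aP: "marcs (Phi (G \<times>\<times> T) {} (\<lambda>k. (s k, \<one>\<^bsub>T\<^esub>))) = {}" unfolding Phi_def by simp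
    have iso: "mg_iso (Phi (G \<times>\<times> T) {} (\<lambda>k. (s k, \<one>\<^bsub>T\<^esub>))) \<Gamma>"
      unfolding mg_iso_def v a vP aP by (simp add: bij_betw_def)
    have "group (G \<times>\<times> T)" by (rule DirProd_group[OF G gT])
    moreover have "comm_group G \<longrightarrow> comm_group (G \<times>\<times> T)" using dirprod_comm cT by blast
    moreover have "(\<lambda>k. (s k, \<one>\<^bsub>T\<^esub>)) \<in> {} \<rightarrow> carrier (G \<times>\<times> T)" by simp
    ultimately show ?thesis using iso by blast
  next
    case False
    obtain T :: "('v set \<Rightarrow> int) monoid" and \<beta> where T: "comm_group T" "bij_betw \<beta> (carrier T) ?K"
      using exists_T[OF False] by blast
    have gT: "group T" using T(1) unfolding comm_group_def by blast
    have "\<forall>C\<in>?K. mg_iso (Phi G I s) (mg_induced \<Gamma> C)"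
    proof
      fix C assume "C \<in> ?K"
      then have "mg_iso (mg_induced \<Gamma> C) \<Gamma>0" using assms(3) by blast
      then have "mg_iso \<Gamma>0 (mg_induced \<Gamma> C)" by (rule mg_iso_sym[OF wfg_induced])
      then show "mg_iso (Phi G I s) (mg_induced \<Gamma> C)" by (rule mg_iso_trans[OF iso0])
    qed
    then have i1: "mg_iso (PX (Phi G I s) (carrier T)) \<Gamma>" by (rule PX_iso[OF assms(1) T(2)])
    have i2: "mg_iso (Phi (G \<times>\<times> T) I (\<lambda>k. (s k, \<one>\<^bsub>T\<^esub>))) (PX (Phi G I s) (carrier T))"
      by (rule mg_iso_sym[OF wfg_PX[OF wfg_Phi] Phi_prod_iso[OF G gT s]])
    have iso: "mg_iso (Phi (G \<times>\<times> T) I (\<lambda>k. (s k, \<one>\<^bsub>T\<^esub>))) \<Gamma>" by (rule mg_iso_trans[OF i2 i1])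
    have "group (G \<times>\<times> T)" by (rule DirProd_group[OF G gT])
    moreover have "comm_group G \<longrightarrow> comm_group (G \<times>\<times> T)" using dirprod_comm T(1) by blast
    moreover have "(\<lambda>k. (s k, \<one>\<^bsub>T\<^esub>)) \<in> I \<rightarrow> carrier (G \<times>\<times> T)"
      using s monoid.one_closed[OF group.is_monoid[OF gT]] by (auto simp: Pi_def)
    ultimately show ?thesis using iso by blast
  qed
  show ?thesis
  proof (intro conjI impI)
    assume "G_graph TYPE('g) TYPE('i) \<Gamma>0"
    then obtain G :: "'g monoid" and I :: "'i set" and s where
      "group G" "s \<in> I \<rightarrow> carrier G" "mg_iso (Phi G I s) \<Gamma>0" unfolding G_graph_def by blast
    from key[OF this] show "G_graph TYPE('g \<times> ('v set \<Rightarrow> int)) TYPE('i) \<Gamma>"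
      unfolding G_graph_def by blast
  next
    assume "abelian_G_graph TYPE('g) TYPE('i) \<Gamma>0"
    then obtain G :: "'g monoid" and I :: "'i set" and s where
      c: "comm_group G" "s \<in> I \<rightarrow> carrier G" "mg_iso (Phi G I s) \<Gamma>0" unfolding abelian_G_graph_def by blast
    then have "group G" unfolding comm_group_def by blast
    from key[OF this c(2,3)] c(1) show "abelian_G_graph TYPE('g \<times> ('v set \<Rightarrow> int)) TYPE('i) \<Gamma>"
      unfolding abelian_G_graph_def by blast
  qed
qed

end
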